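(* Let $r\in\mathbb{R}$, $r\neq 0$. Then $\{r^k\}_{k=0}^{\infty}$ is a Legendre multiplier sequence if and only if $|r|=1$.
   Context: The Legendre polynomials $\mathfrak{Le}_n(x)$ are defined by $\frac{1}{\sqrt{1-2xt+t^2}}=\sum_{k=0}^{\infty}\mathfrak{Le}_k(x)t^k$. A real sequence $\{\gamma_k\}_{k=0}^{\infty}$ is a Legendre multiplier sequence if, for every $n$ and all real $a_0,\dots,a_n$, the polynomial $\sum_{k=0}^n a_k\gamma_k\mathfrak{Le}_k(x)$ has only real zeros whenever $\sum_{k=0}^n a_k\mathfrak{Le}_k(x)$ has only real zeros. *)

theory Defs
  imports "HOL-Analysis.Analysis" "HOL-Computational_Algebra.Polynomial"
begin

definition Leg_fun :: "nat \<Rightarrow> real \<Rightarrow> real" where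
  "Leg_fun n x = (deriv ^^ n) (\<lambda>t. 1 / sqrt (1 - 2 * x * t + t\<^sup>2)) 0 / fact n"

definition Leg :: "nat \<Rightarrow> real poly" where
  "Leg n = (THE p. \<forall>x. poly p x = Leg_fun n x)"

definition only_real_zeros :: "real poly \<Rightarrow> bool" where
  "only_real_zeros p \<longleftrightarrow> (\<forall>z::complex. poly (map_poly complex_of_real p) z = 0 \<longrightarrow> z \<in> \<real>)"

definition legendre_multiplier_sequence :: "(nat \<Rightarrow> real) \<Rightarrow> bool" where
  "legendre_multiplier_sequence \<gamma> \<longleftrightarrow>
     (\<forall>n (a :: nat \<Rightarrow> real).
        only_real_zeros (\<Sum>k\<le>n. smult (a k) (Leg k)) \<longrightarrow>
        only_real_zeros (\<Sum>k\<le>n. smult (a k * \<gamma> k) (Leg k)))"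

end

theory Submission
  imports Defs
begin

datatype ex = C "real poly" | T | W | Ad ex ex | Mu ex ex

fun ev :: "ex \<Rightarrow> real \<Rightarrow> real \<Rightarrow> real" where
  "ev (C p) x t = poly p x"
| "ev T x t = t"
| "ev W x t = 1 / sqrt (1 - 2 * x * t + t\<^sup>2)"
| "ev (Ad a b) x t = ev a x t + ev b x t"
| "ev (Mu a b) x t = ev a x t * ev b x t"

fun de :: "ex \<Rightarrow> ex" where
  "de (C p) = C 0"
| "de T = C 1"
| "de W = Mu (Ad (C [:0,1:]) (Mu (C [:-1:]) T)) (Mu W (Mu W W))"
| "de (Ad a b) = Ad (de a) (de b)"
| "de (Mu a b) = Ad (Mu (de a) b) (Mu a (de b))"

fun ev0 :: "ex \<Rightarrow> real poly" where
  "ev0 (C p) = p"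
| "ev0 T = 0"
| "ev0 W = 1"
| "ev0 (Ad a b) = ev0 a + ev0 b"
| "ev0 (Mu a b) = ev0 a * ev0 b"

lemma ev0_ok: "ev e x 0 = poly (ev0 e) x"
  by (induction e) auto

lemma W_deriv:
  assumes "0 < 1 - 2 * x * t + t\<^sup>2"
  shows "((\<lambda>t. 1 / sqrt (1 - 2 * x * t + t\<^sup>2)) has_real_derivative
          (x - t) * (1 / sqrt (1 - 2 * x * t + t\<^sup>2))^3) (at t)"
proof -
  define Q where "Q = 1 - 2 * x * t + t\<^sup>2"
  have q: "Q > 0" using assms Q_def by simp
  have "((\<lambda>t. 1 / sqrt (1 - 2 * x * t + t\<^sup>2)) has_real_derivative
     - (inverse (sqrt Q) / 2 * (- (2*x) + 2 * t)) / (sqrt Q)^2) (at t)"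
    unfolding Q_def using assms
    by (auto intro!: derivative_eq_intros simp: power2_eq_square)
  moreover have "- (inverse (sqrt Q) / 2 * (- (2*x) + 2 * t)) / (sqrt Q)^2 = (x - t) * (1 / sqrt Q)^3"
    using q by (simp add: field_simps power_def)
  ultimately show ?thesis unfolding Q_def by simp
qed

lemma ev_deriv:
  assumes "0 < 1 - 2 * x * t + t\<^sup>2"
  shows "((\<lambda>t. ev e x t) has_real_derivative ev (de e) x t) (at t)"
  using assms
proof (induction e)
  case W
  then show ?case using W_deriv[OF W] by (simp add: power3_eq_cube algebra_simps)
next
  case (C p) show ?case by (simp add: DERIV_const)
next
  case T show ?case by (simp add: DERIV_ident)
next
  case (Ad a b)
  have "((\<lambda>t. ev a x t + ev b x t) has_real_derivative ev (de a) x t + ev (de b) x t) (at t)"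
    using Ad by (intro DERIV_add) auto
  then show ?case by simp
next
  case (Mu a b)
  have "((\<lambda>t. ev a x t * ev b x t) has_real_derivative ev (de a) x t * ev b x t + ev a x t * ev (de b) x t) (at t)"
    using DERIV_mult[OF Mu.IH] Mu.prems by (simp add: mult.commute)
  then show ?case by simp
qed

definition SS :: "real \<Rightarrow> real set" where "SS x = {t. 0 < 1 - 2 * x * t + t\<^sup>2}"

lemma open_SS: "open (SS x)"
  unfolding SS_def by (intro open_Collect_less continuous_intros)

lemma deriv_iter:
  "t \<in> SS x \<Longrightarrow> (deriv ^^ n) (\<lambda>t. 1 / sqrt (1 - 2 * x * t + t\<^sup>2)) t = ev ((de ^^ n) W) x t"
proof (induction n arbitrary: t)
  case 0 then show ?case by simp
next
  case (Suc n)
  have "((\<lambda>t. ev ((de ^^ n) W) x t) has_real_derivative ev (de ((de ^^ n) W)) x t) (at t)"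
    using ev_deriv Suc.prems unfolding SS_def by blast
  then have "((deriv ^^ n) (\<lambda>t. 1 / sqrt (1 - 2 * x * t + t\<^sup>2)) has_real_derivative ev (de ((de ^^ n) W)) x t) (at t)"
    by (rule has_field_derivative_transform_within_open[OF _ open_SS Suc.prems]) (simp add: Suc.IH)
  then show ?case by (simp add: DERIV_imp_deriv)
qed

definition LP :: "nat \<Rightarrow> real poly" where "LP n = smult (1 / fact n) (ev0 ((de ^^ n) W))"

lemma Leg_fun_LP: "Leg_fun n x = poly (LP n) x"
proof -
  have "0 \<in> SS x" unfolding SS_def by simp
  from deriv_iter[OF this, of n] show ?thesis
    unfolding Leg_fun_def LP_def by (simp add: ev0_ok)
qed

lemma Leg_LP: "Leg n = LP n"
  unfolding Leg_def
proof (rule the_equality)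
  show "\<forall>x. poly (LP n) x = Leg_fun n x" by (simp add: Leg_fun_LP)
next
  fix p assume "\<forall>x. poly p x = Leg_fun n x"
  then have "poly p = poly (LP n)" by (auto simp: Leg_fun_LP)
  then show "p = LP n" by (simp add: poly_eq_poly_eq_iff)
qed

lemma Leg0: "Leg 0 = 1" by (simp add: Leg_LP LP_def)
lemma Leg1: "Leg 1 = [:0,1:]" by (simp add: Leg_LP LP_def)
lemma Leg2: "Leg 2 = [:-1/2,0,3/2:]" by (simp add: Leg_LP LP_def numeral_2_eq_2)
lemma Leg3: "Leg 3 = [:0,-3/2,0,5/2:]" by (simp add: Leg_LP LP_def numeral_3_eq_3)
lemma Leg1': "Leg (Suc 0) = [:0,1:]" using Leg1 by simp
lemma Leg2': "Leg (Suc (Suc 0)) = [:-1/2,0,3/2:]" using Leg2 by (simp add: numeral_2_eq_2)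
lemma Leg3': "Leg (Suc (Suc (Suc 0))) = [:0,-3/2,0,5/2:]" using Leg3 by (simp add: numeral_3_eq_3)

lemma parity_aux:
  "t \<in> SS (-x) \<Longrightarrow> (deriv ^^ n) (\<lambda>t. 1 / sqrt (1 - 2 * (-x) * t + t\<^sup>2)) t
     = (-1)^n * ev ((de ^^ n) W) x (-t)"
proof (induction n arbitrary: t)
  case 0 then show ?case by (simp add: power2_eq_square)
next
  case (Suc n)
  have mt: "-t \<in> SS x" using Suc.prems unfolding SS_def by (simp add: power2_eq_square)
  have d1: "((\<lambda>t. ev ((de ^^ n) W) x t) has_real_derivative ev (de ((de ^^ n) W)) x (-t)) (at (-t))"
    using ev_deriv mt unfolding SS_def by blast
  have "((\<lambda>t. ev ((de ^^ n) W) x (-t)) has_real_derivative ev (de ((de ^^ n) W)) x (-t) * (-1)) (at t)"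
    by (rule DERIV_chain2[where f="\<lambda>t. ev ((de ^^ n) W) x t" and g=uminus, OF d1]) (auto intro!: derivative_eq_intros)
  then have "((\<lambda>t. (-1)^n * ev ((de ^^ n) W) x (-t)) has_real_derivative (-1)^n * (ev (de ((de ^^ n) W)) x (-t) * (-1))) (at t)"
    by (rule DERIV_cmult)
  then have "((deriv ^^ n) (\<lambda>t. 1 / sqrt (1 - 2 * (-x) * t + t\<^sup>2)) has_real_derivative (-1)^n * (ev (de ((de ^^ n) W)) x (-t) * (-1))) (at t)"
    by (rule has_field_derivative_transform_within_open[OF _ open_SS Suc.prems]) (metis Suc.IH)
  then show ?case by (simp add: DERIV_imp_deriv)
qed

lemma parity: "poly (Leg n) (-x) = (-1)^n * poly (Leg n) x"
proof -
  have z: "0 \<in> SS (-x)" unfolding SS_def by simp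
  have "ev ((de ^^ n) W) (-x) 0 = (-1)^n * ev ((de ^^ n) W) x 0"
    using parity_aux[OF z, of n] deriv_iter[OF z, of n] by simp
  then show ?thesis by (simp add: Leg_LP LP_def ev0_ok)
qed

lemma minus_one_case:
  assumes "only_real_zeros (\<Sum>k\<le>n. smult (a k) (Leg k))"
  shows "only_real_zeros (\<Sum>k\<le>n. smult (a k * (-1)^k) (Leg k))"
proof -
  define P where "P = (\<Sum>k\<le>n. smult (a k) (Leg k))"
  define R where "R = (\<Sum>k\<le>n. smult (a k * (-1)^k) (Leg k))"
  have "poly R = poly (pcompose P [:0,-1:])"
  proof
    fix x
    show "poly R x = poly (pcompose P [:0,-1:]) x"
      unfolding R_def P_def by (simp add: poly_pcompose poly_sum parity mult_ac)
  qed
  then have RP: "R = pcompose P [:0,-1:]" by (simp add: poly_eq_poly_eq_iff)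
  have M: "map_poly complex_of_real R = pcompose (map_poly complex_of_real P) [:0,-1:]"
    by (rule poly_eqI) (simp add: RP coeff_map_poly coeff_pcompose_linear)
  show ?thesis
    unfolding R_def[symmetric] only_real_zeros_def
  proof (intro allI impI)
    fix z :: complex assume "poly (map_poly complex_of_real R) z = 0"
    then have "poly (map_poly complex_of_real P) (-z) = 0" by (simp add: M poly_pcompose)
    then have "-z \<in> \<real>" using assms unfolding P_def only_real_zeros_def by blast
    then show "z \<in> \<real>" by (metis Reals_minus_iff)
  qed
qed

lemma small_case:
  fixes r :: real
  assumes r0: "r \<noteq> 0" and r1: "r^2 < 1"
  shows "\<not> legendre_multiplier_sequence (\<lambda>k. r ^ k)"
proof
  assume L: "legendre_multiplier_sequence (\<lambda>k. r ^ k)"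
  define a :: "nat \<Rightarrow> real" where "a = (\<lambda>k. if k = 0 then 1/3 else if k = 2 then 2/3 else 0)"
  have P: "(\<Sum>k\<le>2. smult (a k) (Leg k)) = [:0,0,1:]"
    by (simp add: a_def Leg0 Leg1 Leg2' numeral_2_eq_2 one_pCons)
  have Q: "(\<Sum>k\<le>2. smult (a k * r^k) (Leg k)) = [:(1 - r^2)/3, 0, r^2:]"
    by (simp add: a_def Leg0 Leg1 Leg2' numeral_2_eq_2 one_pCons field_simps)
  have "only_real_zeros [:0,0,1:]"
    unfolding only_real_zeros_def by (simp add: map_poly_pCons)
  with L P Q have "only_real_zeros [:(1 - r^2)/3, 0, r^2:]"
    unfolding legendre_multiplier_sequence_def by metis
  moreover
  define b where "b = sqrt ((1 - r^2) / (3 * r^2))"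
  have bpos: "b > 0" unfolding b_def using r0 r1 by (simp add: field_simps)
  have b2: "b^2 = (1 - r^2) / (3 * r^2)" unfolding b_def using r0 r1 by simp
  define z where "z = Complex 0 b"
  have "poly (map_poly complex_of_real [:(1 - r^2)/3, 0, r^2:]) z = 0"
  proof -
    have "r^2 * b^2 = (1 - r^2)/3" using b2 r0 by (simp add: field_simps)
    then show ?thesis unfolding z_def
      by (simp add: map_poly_pCons complex_eq_iff power2_eq_square field_simps)
  qed
  moreover have "z \<notin> \<real>" unfolding z_def using bpos by (simp add: complex_is_Real_iff)
  ultimately show False unfolding only_real_zeros_def by blast
qed

lemma large_case:
  fixes r :: real
  assumes r1: "r^2 > 1"
  shows "\<not> legendre_multiplier_sequence (\<lambda>k. r ^ k)"
proof
  assume L: "legendre_multiplier_sequence (\<lambda>k. r ^ k)"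
  have r0: "r \<noteq> 0" using r1 by auto
  define v where "v = sqrt (r^2 - 1)"
  have v2: "v^2 = r^2 - 1" unfolding v_def using r1 by simp
  have vpos: "v > 0" unfolding v_def using r1 by simp
  have v3: "v^3 = v * (r^2 - 1)" using v2 by (simp add: power3_eq_cube power2_eq_square)
  define a :: "nat \<Rightarrow> real" where "a = (\<lambda>k. if k = 0 then - v - v^3 else if k = 1 then 3/5 + 3 * v^2
      else if k = 2 then -2 * v else if k = 3 then 2/5 else 0)"
  have P: "(\<Sum>k\<le>3. smult (a k) (Leg k)) = [: -(v^3), 3 * v^2, -3 * v, 1:]"
    by (simp add: a_def Leg0 Leg1' Leg2' Leg3' numeral_3_eq_3 one_pCons field_simps)
  have e: "r * (r * v) = v + v * (v * v)"
  proof -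
    have "v * v = r * r - 1" using v2 by (simp add: power2_eq_square)
    then have "v + v * (v * v) = v + v * (r * r - 1)" by simp
    then show ?thesis by (simp add: algebra_simps)
  qed
  have Q: "(\<Sum>k\<le>3. smult (a k * r^k) (Leg k)) = [:0, 12/5 * r * (r^2 - 1), -3 * v * r^2, r^3:]"
    apply (simp add: a_def Leg0 Leg1' Leg2' Leg3' numeral_3_eq_3 one_pCons field_simps v2 v3 e power2_eq_square)
    using v2 unfolding power2_eq_square by algebra
  have "only_real_zeros [: -(v^3), 3 * v^2, -3 * v, 1:]"
    unfolding only_real_zeros_def
  proof (intro allI impI)
    fix z :: complex
    assume "poly (map_poly complex_of_real [: -(v^3), 3 * v^2, -3 * v, 1:]) z = 0"
    then have "(z - of_real v)^3 = 0"
      by (simp add: map_poly_pCons power3_eq_cube power2_eq_square algebra_simps)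
    then have "z = of_real v" by simp
    then show "z \<in> \<real>" by simp
  qed
  with L P Q have "only_real_zeros [:0, 12/5 * r * (r^2 - 1), -3 * v * r^2, r^3:]"
    unfolding legendre_multiplier_sequence_def by metis
  moreover
  define \<beta> where "\<beta> = sqrt (3 * (r^2 - 1) / 5)"
  have bpos: "\<beta> > 0" unfolding \<beta>_def using r1 by simp
  have b2: "\<beta>^2 = 3 * (r^2 - 1) / 5" unfolding \<beta>_def using r1 by simp
  define y :: complex where "y = Complex (3 * v / 2) (\<beta> / 2)"
  define z where "z = y / of_real r"
  have y0: "y^2 - 3 * of_real v * y + of_real (12/5 * (r^2 - 1)) = 0"
    unfolding y_def using b2 v2
    by (simp add: complex_eq_iff power2_eq_square field_simps)
  have "poly (map_poly complex_of_real [:0, 12/5 * r * (r^2 - 1), -3 * v * r^2, r^3:]) z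
      = z * of_real r * (y^2 - 3 * of_real v * y + of_real (12/5 * (r^2 - 1)))"
    unfolding z_def using r0
    by (simp add: map_poly_pCons power2_eq_square power3_eq_cube field_simps)
  then have "poly (map_poly complex_of_real [:0, 12/5 * r * (r^2 - 1), -3 * v * r^2, r^3:]) z = 0"
    using y0 by simp
  moreover have "z \<notin> \<real>"
  proof
    assume "z \<in> \<real>"
    then have "z * of_real r \<in> \<real>" by simp
    then have "y \<in> \<real>" unfolding z_def using r0 by simp
    then show False unfolding y_def using bpos by (simp add: complex_is_Real_iff)
  qed
  ultimately show False unfolding only_real_zeros_def by blast
qed

theorem theorem4p11:
  fixes r :: real
  assumes "r \<noteq> 0"
  shows "legendre_multiplier_sequence (\<lambda>k. r ^ k) \<longleftrightarrow> \<bar>r\<bar> = 1"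
proof
  assume L: "legendre_multiplier_sequence (\<lambda>k. r ^ k)"
  show "\<bar>r\<bar> = 1"
  proof (rule ccontr)
    assume "\<bar>r\<bar> \<noteq> 1"
    then have "r^2 < 1 \<or> r^2 > 1"
      using abs_square_less_1[of r] abs_square_eq_1[of r] by linarith
    then show False using small_case[OF assms] large_case L by blast
  qed
next
  assume "\<bar>r\<bar> = 1"
  then have "r = 1 \<or> r = -1" by auto
  then show "legendre_multiplier_sequence (\<lambda>k. r ^ k)"
  proof
    assume "r = 1" then show ?thesis unfolding legendre_multiplier_sequence_def by simp
  next
    assume "r = -1" then show ?thesis unfolding legendre_multiplier_sequence_def
      using minus_one_case by blast
  qed
qed

end
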